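(* Let $p$ be a prime, $l\ge 0$ an integer, $q=p^l$, and let $k$ be an integer with $0\le k\le q/2$. For $n\ge0$ let $P(n)$ denote the $n\times n$ matrix with entries $\binom{i+j}{i}$, $0\le i,j<n$, and let $\chi_n(t)=\det(tI(n)-P(n))$. Then $$\chi_{q-k}(t)\equiv (t^2+t+1)^{(q-\epsilon(q))/3-k}\,(t-1)^{(q+2\epsilon(q))/3-k}\,\det(t^2I(k)+P(k))\pmod p,$$ where $\epsilon(q)\in\{-1,0,1\}$ is defined by $\epsilon(q)\equiv q\pmod 3$.
   Context: $I(n)$ is the $n\times n$ identity matrix; the determinant of a $0\times 0$ matrix is $1$. The congruence is coefficientwise in $\mathbf{Z}[t]$. *)

theory Defs
  imports "Jordan_Normal_Form.Determinant" "HOL-Number_Theory.Cong"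
begin

definition Pmat :: "nat \<Rightarrow> int mat" where
  "Pmat n = mat n n (\<lambda>(i, j). int ((i + j) choose i))"

definition chi :: "nat \<Rightarrow> int poly" where
  "chi n = det ([:0, 1:] \<cdot>\<^sub>m 1\<^sub>m n - map_mat (\<lambda>a. [:a:]) (Pmat n))"

definition Dpoly :: "nat \<Rightarrow> int poly" where
  "Dpoly k = det ([:0, 0, 1:] \<cdot>\<^sub>m 1\<^sub>m k + map_mat (\<lambda>a. [:a:]) (Pmat k))"

definition eps :: "nat \<Rightarrow> int" where
  "eps q = (if q mod 3 = 0 then 0 else if q mod 3 = 1 then 1 else -1)"

end

theory Submission
  imports Defs "HOL-Computational_Algebra.Polynomial_Factorial" "Jordan_Normal_Form.Char_Poly"
begin
lemma I1: "i \<le> N \<Longrightarrow> j \<le> N \<Longrightarrow>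
  (\<Sum>m\<le>i. (-1)^m * int (i choose m) * int ((N-m) choose j)) = int ((N-i) choose (N-j))"
proof (induction i arbitrary: N j)
  case 0
  then show ?case by (simp add: binomial_symmetric[symmetric])
next
  case (Suc i)
  show ?case
  proof (cases "j = N")
    case True
    have "(\<Sum>m\<le>Suc i. (-1)^m * int (Suc i choose m) * int ((N-m) choose j)) =
          (\<Sum>m\<le>Suc i. if m = 0 then 1 else 0)"
      using Suc.prems by (intro sum.cong) (auto simp: True binomial_eq_0)
    also have "\<dots> = 1" by simp
    finally show ?thesis using True by simp
  next
    case False
    with Suc.prems have jN: "j \<le> N - 1" "i \<le> N - 1" by auto
    define h where "h = (\<lambda>N' m. (-1)^m * int (i choose m) * int ((N'-m) choose j))"
    have "(\<Sum>m\<le>Suc i. (-1)^m * int (Suc i choose m) * int ((N-m) choose j)) =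
       int (N choose j) + (\<Sum>m\<le>i. (-1)^(Suc m) * int (Suc i choose Suc m) * int ((N- Suc m) choose j))"
      unfolding sum.atMost_Suc_shift by simp
    also have "\<dots> = int (N choose j) + (\<Sum>m\<le>i. (-1)^(Suc m) * int (i choose Suc m) * int ((N- Suc m) choose j)
          - h (N-1) m)"
      by (intro arg_cong2[where f="(+)"] refl sum.cong) (simp_all add: h_def algebra_simps)
    also have "\<dots> = int (N choose j) + (\<Sum>m\<le>i. (-1)^(Suc m) * int (i choose Suc m) * int ((N- Suc m) choose j))
          - (\<Sum>m\<le>i. h (N-1) m)"
      by (simp only: sum_subtractf add_diff_eq)
    also have "int (N choose j) + (\<Sum>m\<le>i. (-1)^(Suc m) * int (i choose Suc m) * int ((N- Suc m) choose j))
       = (\<Sum>m\<le>Suc i. h N m)"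
      unfolding h_def sum.atMost_Suc_shift by simp
    also have "(\<Sum>m\<le>Suc i. h N m) = (\<Sum>m\<le>i. h N m)"
      by (simp add: h_def)
    also have "(\<Sum>m\<le>i. h N m) = int ((N-i) choose (N-j))"
      using Suc.IH[of N j] Suc.prems by (simp add: h_def)
    also have "(\<Sum>m\<le>i. h (N-1) m) = int ((N-1-i) choose (N-1-j))"
      using Suc.IH[of "N-1" j] jN by (simp add: h_def)
    finally have fin: "(\<Sum>m\<le>Suc i. (-1)^m * int (Suc i choose m) * int ((N-m) choose j)) =
        int ((N-i) choose (N-j)) - int ((N-1-i) choose (N-1-j))" .
    have e1: "N - i = Suc (N - Suc i)" using Suc.prems by simp
    have e2: "N - j = Suc (N - 1 - j)" using Suc.prems False by simp
    have e3: "N - 1 - i = N - Suc i" by simp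
    have "int ((N-i) choose (N-j)) = int ((N - Suc i) choose (N-1-j)) + int ((N - Suc i) choose (N - j))"
      unfolding e1 e2 by simp
    then show ?thesis unfolding fin e3 by simp
  qed
qed

lemma I2: "(\<Sum>m\<le>a. (-1)^m * int (a choose m) * int (m choose b)) = (if a = b then (-1)^b else 0)"
proof (induction a arbitrary: b)
  case 0
  then show ?case by auto
next
  case (Suc a)
  define S where "S = (\<lambda>b. (\<Sum>m\<le>a. (-1)^m * int (a choose m) * int (m choose b)))"
  show ?case
  proof (cases b)
    case 0
    have "(\<Sum>m\<le>Suc a. (-1)^m * int (Suc a choose m)) = 0"
      using choose_alternating_sum[of "Suc a", where 'a=int] by (simp add: mult.commute)
    then show ?thesis using 0 by simp
  next
    case (Suc b')
    have "(\<Sum>m\<le>Suc a. (-1)^m * int (Suc a choose m) * int (m choose b)) =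
       (\<Sum>m\<le>a. (-1)^(Suc m) * int (Suc a choose Suc m) * int (Suc m choose b))"
      using Suc unfolding sum.atMost_Suc_shift by simp
    also have "\<dots> = (\<Sum>m\<le>a. (-1)^(Suc m) * int (a choose m) * int (Suc m choose b)
        + (-1)^(Suc m) * int (a choose Suc m) * int (Suc m choose b))"
      by (intro sum.cong refl) (simp add: algebra_simps)
    also have "\<dots> = (\<Sum>m\<le>a. (-1)^(Suc m) * int (a choose m) * int (Suc m choose b))
        + (\<Sum>m\<le>a. (-1)^(Suc m) * int (a choose Suc m) * int (Suc m choose b))"
      by (rule sum.distrib)
    also have "(\<Sum>m\<le>a. (-1)^(Suc m) * int (a choose Suc m) * int (Suc m choose b))
       = (\<Sum>m\<le>Suc a. (-1)^m * int (a choose m) * int (m choose b))"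
      using Suc unfolding sum.atMost_Suc_shift by simp
    also have "\<dots> = S b"
      unfolding S_def by simp
    also have "(\<Sum>m\<le>a. (-1)^(Suc m) * int (a choose m) * int (Suc m choose b)) =
        (\<Sum>m\<le>a. - ((-1)^m * int (a choose m) * int (m choose b')) - (-1)^m * int (a choose m) * int (m choose b))"
      using Suc by (intro sum.cong refl) (simp add: algebra_simps)
    also have "\<dots> = - S b' - S b"
      unfolding S_def by (simp only: sum_subtractf sum_negf)
    finally show ?thesis using Suc.IH[of b'] Suc unfolding S_def by simp
  qed
qed

definition sdiag :: "nat \<Rightarrow> int" where
  "sdiag N = (\<Sum>i\<le>N. (-1)^i * int ((N-i) choose i))"

lemma sdiag_0: "sdiag 0 = 1" by (simp add: sdiag_def)
lemma sdiag_1: "sdiag (Suc 0) = 1" by (simp add: sdiag_def)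

lemma sdiag_rec: "sdiag (Suc (Suc N)) = sdiag (Suc N) - sdiag N"
proof -
  define g where "g = (\<Sum>i\<le>N. (-1)^i * int ((N-i) choose Suc i))"
  have "sdiag (Suc N) = (\<Sum>i\<le>Suc N. (-1)^i * int ((Suc N-i) choose i))"
    by (simp add: sdiag_def)
  also have "\<dots> = 1 + (\<Sum>i\<le>N. (-1)^(Suc i) * int ((Suc N- Suc i) choose Suc i))"
    unfolding sum.atMost_Suc_shift by simp
  also have "\<dots> = 1 - g" by (simp add: g_def sum_negf)
  finally have e1: "sdiag (Suc N) = 1 - g" .
  have "sdiag (Suc (Suc N)) = (\<Sum>i\<le>Suc (Suc N). (-1)^i * int ((Suc (Suc N)-i) choose i))"
    by (simp add: sdiag_def)
  also have "\<dots> = 1 + (\<Sum>i\<le>Suc N. (-1)^(Suc i) * int ((Suc N - i) choose Suc i))"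
    unfolding sum.atMost_Suc_shift by simp
  also have "(\<Sum>i\<le>Suc N. (-1)^(Suc i) * int ((Suc N - i) choose Suc i))
      = (\<Sum>i\<le>N. (-1)^(Suc i) * int ((Suc N - i) choose Suc i))"
    by simp
  also have "\<dots> = (\<Sum>i\<le>N. (-1)^(Suc i) * int ((N - i) choose Suc i) + (-1)^(Suc i) * int ((N - i) choose i))"
    by (intro sum.cong refl) (simp add: Suc_diff_le algebra_simps)
  also have "\<dots> = - g - sdiag N"
    by (simp add: sum.distrib g_def sdiag_def sum_negf sum_subtractf)
  finally show ?thesis using e1 by simp
qed

lemma eps_rec: "eps (Suc (Suc n)) = - eps (Suc n) - eps n"
  unfolding eps_def by presburger

lemma sdiag_eps: "(-1)^N * sdiag N = eps (Suc N)"
proof (induction N rule: nat_less_induct)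
  case (1 N)
  show ?case
  proof (cases N)
    case 0 then show ?thesis by (simp add: sdiag_0 eps_def)
  next
    case (Suc N')
    show ?thesis
    proof (cases N')
      case 0 then show ?thesis using Suc by (simp add: sdiag_1 eps_def)
    next
      case (Suc M)
      have h1: "(-1)^(Suc M) * sdiag (Suc M) = eps (Suc (Suc M))" using 1 Suc \<open>N = Suc N'\<close> by auto
      have h2: "(-1)^M * sdiag M = eps (Suc M)" using 1 Suc \<open>N = Suc N'\<close> by auto
      have "(-1)^N * sdiag N = (-1)^M * (sdiag (Suc M) - sdiag M)"
        using Suc \<open>N = Suc N'\<close> by (simp add: sdiag_rec)
      also have "\<dots> = - ((-1)^(Suc M) * sdiag (Suc M)) - (-1)^M * sdiag M" by (simp add: algebra_simps)
      also have "\<dots> = eps (Suc N)" using h1 h2 eps_rec[of "Suc M"] Suc \<open>N = Suc N'\<close> by simp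
      finally show ?thesis .
    qed
  qed
qed

lemma prime_power_dvd_choose:
  assumes p: "prime p" and q: "q = p ^ l" and j: "0 < j" "j < q"
  shows "p dvd (q choose j)"
proof (rule ccontr)
  assume nd: "\<not> p dvd (q choose j)"
  have "j * (q choose j) = q * ((q - 1) choose (j - 1))"
    using j by (metis Suc_pred' less_trans times_binomial_minus1_eq zero_less_iff_neq_zero)
  then have "q dvd j * (q choose j)" by simp
  moreover have "coprime q (q choose j)"
    using nd p q by (metis coprime_commute coprime_power_left_iff prime_imp_coprime)
  ultimately have "q dvd j" using coprime_dvd_mult_left_iff by blast
  with j show False by (simp add: nat_dvd_not_less)
qed

lemma sigma_cong:
  assumes p: "prime p" and q: "q = p ^ l"
  shows "[(-1::int)^(q-1) = 1] (mod int p)"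
proof (cases "even q")
  case True
  then have "l > 0" using q by (metis odd_one power_0 gr0I)
  then have "p dvd q" using q by simp
  have "2 dvd p" using True q prime_dvd_power_nat[of 2 p l] two_is_prime_nat by auto
  then have "p = 2" using p unfolding prime_nat_iff by auto
  then show ?thesis by (simp add: cong_iff_dvd_diff)
next
  case False
  then have "even (q - 1)" by simp
  then show ?thesis by simp
qed

lemma C1:
  assumes p: "prime p" and q: "q = p ^ l"
  shows "i < q \<Longrightarrow> j < q \<Longrightarrow> [(-1)^j * int ((q-1-i) choose j) = int ((i+j) choose j)] (mod int p)"
proof (induction i arbitrary: j)
  case 0
  then show ?case
  proof (induction j)
    case 0 then show ?case by simp
  next
    case (Suc j)
    have qq: "q = Suc (q - 1)" using Suc by simp
    have "(q choose Suc j) = ((q-1) choose j) + ((q-1) choose Suc j)"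
      by (subst qq) simp
    then have e: "(-1)^(Suc j) * int ((q-1) choose Suc j) = (-1)^(Suc j) * int (q choose Suc j) + (-1)^j * int ((q-1) choose j)"
      by (simp add: algebra_simps)
    have d: "[int (q choose Suc j) = 0] (mod int p)"
      using prime_power_dvd_choose[OF p q, of "Suc j"] Suc.prems by (simp add: cong_0_iff)
    have "[(-1)^(Suc j) * int (q choose Suc j) + (-1)^j * int ((q-1) choose j) = (-1)^(Suc j) * 0 + 1] (mod int p)"
      using Suc.IH Suc.prems d by (intro cong_add cong_mult cong_refl) auto
    then show ?case using e by simp
  qed
next
  case (Suc i)
  note outer = Suc.IH
  from Suc.prems show ?case
  proof (induction j)
    case 0 then show ?case by simp
  next
    case (Suc j)
    note inner = Suc.IH
    define a where "a = q - 1 - Suc i"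
    have aa: "q - 1 - i = Suc a" using Suc.prems a_def by simp
    have e: "(-1)^(Suc j) * int (a choose Suc j) = (-1)^(Suc j) * int (Suc a choose Suc j) + (-1)^j * int (a choose j)"
      by (simp add: algebra_simps)
    have h1: "[(-1)^(Suc j) * int (Suc a choose Suc j) = int ((i + Suc j) choose Suc j)] (mod int p)"
      using outer[of "Suc j"] aa Suc.prems by simp
    have h2: "[(-1)^j * int (a choose j) = int ((Suc i + j) choose j)] (mod int p)"
      using inner Suc.prems unfolding a_def by simp
    have c: "[(-1)^(Suc j) * int (Suc a choose Suc j) + (-1)^j * int (a choose j) =
           int ((i + Suc j) choose Suc j) + int ((Suc i + j) choose j)] (mod int p)"
      using h1 h2 by (rule cong_add)
    have eq: "int ((i + Suc j) choose Suc j) + int ((Suc i + j) choose j) = int ((Suc i + Suc j) choose Suc j)"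
      by simp
    show ?case using c e eq a_def by metis
  qed
qed

definition Amat :: "nat \<Rightarrow> int mat" where
  "Amat n = mat n n (\<lambda>(i,j). (-1)^(n-1) * (-1)^j * int ((n-1-i) choose j))"

definition A2mat :: "nat \<Rightarrow> int mat" where
  "A2mat n = mat n n (\<lambda>(i,j). (-1)^j * int (i choose (n-1-j)))"

lemma Amat_carrier[simp]: "Amat n \<in> carrier_mat n n" by (simp add: Amat_def)
lemma A2mat_carrier[simp]: "A2mat n \<in> carrier_mat n n" by (simp add: A2mat_def)
lemma Amat_dim[simp]: "dim_row (Amat n) = n" "dim_col (Amat n) = n" by (simp_all add: Amat_def)
lemma A2mat_dim[simp]: "dim_row (A2mat n) = n" "dim_col (A2mat n) = n" by (simp_all add: A2mat_def)

lemma sum_ext_atMost: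
  fixes f :: "nat \<Rightarrow> 'a::comm_monoid_add"
  assumes "a < n" "\<And>l. a < l \<Longrightarrow> f l = 0"
  shows "(\<Sum>l\<in>{0..<n}. f l) = (\<Sum>l\<le>a. f l)"
  using assms by (intro sum.mono_neutral_right) auto

lemma neg1_pair: "(-1::int)^k * a * b * ((-1)^k * c * d) = a * b * (c * d)"
  by (cases "even k") (auto simp: algebra_simps)

lemma neg1_sq: "(-1::int)^k * (-1)^k = 1"
  by (cases "even k") auto

lemma AA: "Amat n * Amat n = A2mat n"
proof (rule eq_matI)
  fix i j assume i: "i < dim_row (A2mat n)" and j: "j < dim_col (A2mat n)"
  then have i: "i < n" and j: "j < n" by auto
  define a where "a = n - 1 - i"
  have "(Amat n * Amat n) $$ (i,j) = (\<Sum>l\<in>{0..<n}. ((-1)^(n-1) * (-1)^l * int ((n-1-i) choose l)) *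
          ((-1)^(n-1) * (-1)^j * int ((n-1-l) choose j)))"
    using i j by (simp add: Amat_def scalar_prod_def)
  also have "\<dots> = (\<Sum>l\<in>{0..<n}. (-1)^j * ((-1)^l * int (a choose l) * int ((n-1-l) choose j)))"
    unfolding neg1_pair by (intro sum.cong refl) (simp add: a_def algebra_simps)
  also have "\<dots> = (-1)^j * (\<Sum>l\<le>a. (-1)^l * int (a choose l) * int ((n-1-l) choose j))"
    using i by (subst sum_ext_atMost[of a]) (auto simp: a_def sum_distrib_left)
  also have "\<dots> = (-1)^j * int ((n-1-a) choose (n-1-j))"
    using I1[of a "n-1" j] i j by (simp add: a_def)
  also have "\<dots> = A2mat n $$ (i,j)"
    using i j by (simp add: A2mat_def a_def)
  finally show "(Amat n * Amat n) $$ (i,j) = A2mat n $$ (i,j)" .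
qed auto

lemma AA2: "Amat n * A2mat n = 1\<^sub>m n"
proof (rule eq_matI)
  fix i j assume i: "i < dim_row (1\<^sub>m n :: int mat)" and j: "j < dim_col (1\<^sub>m n :: int mat)"
  then have i: "i < n" and j: "j < n" by auto
  define a where "a = n - 1 - i"
  define b where "b = n - 1 - j"
  have "(Amat n * A2mat n) $$ (i,j) = (\<Sum>l\<in>{0..<n}. ((-1)^(n-1) * (-1)^l * int ((n-1-i) choose l)) *
          ((-1)^j * int (l choose (n-1-j))))"
    using i j by (simp add: Amat_def A2mat_def scalar_prod_def)
  also have "\<dots> = (\<Sum>l\<in>{0..<n}. ((-1)^(n-1) * (-1)^j) * ((-1)^l * int (a choose l) * int (l choose b)))"
    by (intro sum.cong refl) (simp add: a_def b_def algebra_simps)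
  also have "\<dots> = ((-1)^(n-1) * (-1)^j) * (\<Sum>l\<le>a. (-1)^l * int (a choose l) * int (l choose b))"
    using i by (subst sum_ext_atMost[of a]) (auto simp: a_def sum_distrib_left)
  also have "\<dots> = ((-1)^(n-1) * (-1)^j) * (if a = b then (-1)^b else 0)"
    by (simp add: I2)
  also have "\<dots> = (if i = j then 1 else 0)"
  proof -
    have ab: "(a = b) = (i = j)" using i j by (auto simp: a_def b_def)
    have "(-1::int)^(n-1) * (-1)^j * (-1)^(n-1-j) = 1"
    proof -
      have "(-1::int)^j * (-1)^(n-1-j) = (-1)^(n-1)" using j by (simp flip: power_add)
      then show ?thesis by (simp add: mult.assoc neg1_sq)
    qed
    then show ?thesis using ab by (simp add: b_def)
  qed
  also have "\<dots> = 1\<^sub>m n $$ (i,j)" using i j by simp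
  finally show "(Amat n * A2mat n) $$ (i,j) = 1\<^sub>m n $$ (i,j)" .
qed auto

lemma Amat_trace: "0 < n \<Longrightarrow> (\<Sum>i<n. Amat n $$ (i,i)) = eps n"
proof -
  assume n: "0 < n"
  have "(\<Sum>i<n. Amat n $$ (i,i)) = (\<Sum>i<n. (-1)^(n-1) * ((-1)^i * int ((n-1-i) choose i)))"
    by (intro sum.cong refl) (simp add: Amat_def)
  also have "\<dots> = (-1)^(n-1) * sdiag (n-1)"
    using n by (simp add: sdiag_def sum_distrib_left lessThan_Suc_atMost[symmetric])
  also have "\<dots> = eps n" using sdiag_eps[of "n-1"] n by simp
  finally show ?thesis .
qed

lemma jacobi_block:
  fixes B C :: "'a::idom mat"
  assumes B: "B \<in> carrier_mat (m+k) (m+k)" and C: "C \<in> carrier_mat (m+k) (m+k)"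
    and BC: "B * C = c \<cdot>\<^sub>m 1\<^sub>m (m+k)"
  shows "det B * det (mat k k (\<lambda>(i,j). C $$ (m+i, m+j))) = det (mat m m (\<lambda>(i,j). B $$ (i,j))) * c^k"
proof -
  define M where "M = mat (m+k) (m+k) (\<lambda>(i,j). if j < m then (if i = j then 1 else 0) else C $$ (i,j))"
  define C12 where "C12 = mat m k (\<lambda>(i,j). C $$ (i, m+j))"
  define C22 where "C22 = mat k k (\<lambda>(i,j). C $$ (m+i, m+j))"
  define B11 where "B11 = mat m m (\<lambda>(i,j). B $$ (i,j))"
  define B21 where "B21 = mat k m (\<lambda>(i,j). B $$ (m+i,j))"
  have M4: "M = four_block_mat (1\<^sub>m m) C12 (0\<^sub>m k m) C22"
    by (rule eq_matI) (auto simp: M_def C12_def C22_def)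
  have detM: "det M = det C22"
    unfolding M4 by (subst det_four_block_mat_lower_left_zero[of _ m _ k]) (auto simp: C12_def C22_def)
  have Mc: "M \<in> carrier_mat (m+k) (m+k)" by (simp add: M_def)
  have BM: "B * M = four_block_mat B11 (0\<^sub>m m k) B21 (c \<cdot>\<^sub>m 1\<^sub>m k)"
  proof (rule eq_matI)
    fix i j assume "i < dim_row (four_block_mat B11 (0\<^sub>m m k) B21 (c \<cdot>\<^sub>m 1\<^sub>m k))"
      "j < dim_col (four_block_mat B11 (0\<^sub>m m k) B21 (c \<cdot>\<^sub>m 1\<^sub>m k))"
    then have i: "i < m + k" and j: "j < m + k" by (auto simp: B11_def)
    have e: "(B * M) $$ (i,j) = (\<Sum>l\<in>{0..<m+k}. B $$ (i,l) * M $$ (l,j))"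
      using i j B Mc by (simp add: scalar_prod_def)
    show "(B * M) $$ (i,j) = four_block_mat B11 (0\<^sub>m m k) B21 (c \<cdot>\<^sub>m 1\<^sub>m k) $$ (i,j)"
    proof (cases "j < m")
      case True
      have "(\<Sum>l\<in>{0..<m+k}. B $$ (i,l) * M $$ (l,j)) = (\<Sum>l\<in>{0..<m+k}. if l = j then B $$ (i,l) else 0)"
        using True by (intro sum.cong refl) (auto simp: M_def)
      also have "\<dots> = B $$ (i,j)" using j by simp
      finally show ?thesis using e True i j by (auto simp: B11_def B21_def)
    next
      case False
      have "(\<Sum>l\<in>{0..<m+k}. B $$ (i,l) * M $$ (l,j)) = (\<Sum>l\<in>{0..<m+k}. B $$ (i,l) * C $$ (l,j))"
        using False j by (intro sum.cong refl) (auto simp: M_def)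
      also have "\<dots> = (B * C) $$ (i,j)" using i j B C by (simp add: scalar_prod_def)
      also have "\<dots> = (if i = j then c else 0)" unfolding BC using i j by simp
      finally show ?thesis using e False i j by (auto simp: B11_def B21_def)
    qed
  qed (use B Mc in \<open>auto simp: B11_def\<close>)
  have "det (B * M) = det B * det M" by (rule det_mult[OF B Mc])
  also have "det (B * M) = det B11 * det (c \<cdot>\<^sub>m 1\<^sub>m k)"
    unfolding BM by (rule det_four_block_mat_upper_right_zero) (auto simp: B11_def B21_def)
  finally show ?thesis using detM by (simp add: C22_def B11_def)
qed

lemma Phi_irred: "irreducible ([:1,1,1:] :: int poly)"
proof (rule irreducibleI)
  show "[:1,1,1:] \<noteq> (0::int poly)" by simp
  show "\<not> is_unit ([:1,1,1:] :: int poly)" by (simp add: is_unit_poly_iff)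
  fix a b :: "int poly" assume ab: "[:1,1,1:] = a * b"
  then have a0: "a \<noteq> 0" and b0: "b \<noteq> 0" by auto
  have "degree (a * b) = 2" unfolding ab[symmetric] by simp
  then have deg: "degree a + degree b = 2"
    using degree_mult_eq[OF a0 b0] by simp
  show "is_unit a \<or> is_unit b"
  proof (cases "degree a = 0")
    case True
    then obtain c where c: "a = [:c:]" by (metis degree_eq_zeroE)
    have "coeff (a * b) 0 = 1" using ab[symmetric] by simp
    then have "c * coeff b 0 = 1" using c by simp
    then have "c dvd 1" by (metis dvd_triv_left)
    then show ?thesis using c by (simp add: is_unit_const_poly_iff)
  next
    case False
    show ?thesis
    proof (cases "degree b = 0")
      case True
      then obtain c where c: "b = [:c:]" by (metis degree_eq_zeroE)
      have "coeff (a * b) 0 = 1" using ab[symmetric] by simp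
      then have "coeff a 0 * c = 1" using c by (simp add: mult.commute)
      then have "c dvd 1" by (metis dvd_triv_right)
      then show ?thesis using c by (simp add: is_unit_const_poly_iff)
    next
      case False2: False
      with False deg have "degree a = 1" "degree b = 1" by auto
      then obtain a0 a1 b0 b1 where A: "a = [:a0,a1:]" and B: "b = [:b0,b1:]"
        by (metis degree1_coeffs)
      have "[:1,1,1:] = [:a0*b0, a0*b1 + a1*b0, a1*b1:]"
        using ab A B by (simp add: algebra_simps)
      then have e: "a0*b0 = 1" "a0*b1 + a1*b0 = 1" "a1*b1 = 1" by auto
      from e(1) e(3) have "a0 = b0" "a1 = b1" by (auto simp: zmult_eq_1_iff)
      with e show ?thesis by (auto simp: zmult_eq_1_iff)
    qed
  qed
qed

lemma Phi_prime: "prime ([:1,1,1:] :: int poly)"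
  unfolding prime_def using irreducible_imp_prime_poly[OF Phi_irred]
  by (simp add: normalize_poly_def one_pCons[symmetric])

lemma Lin_prime: "prime ([:-1,1:] :: int poly)"
  unfolding prime_def using prime_elem_linear_poly[of 1 "-1::int"]
  by (simp add: normalize_poly_def one_pCons[symmetric])

lemma lead_coeff_Lin_Phi: "lead_coeff ([:-1,1:]^x * [:1,1,1:]^y :: int poly) = 1"
  by (simp add: lead_coeff_mult lead_coeff_power)

lemma factor_Lin_Phi:
  fixes f :: "int poly"
  assumes mon: "lead_coeff f = 1" and dv: "f dvd [:-1,1:]^N * [:1,1,1:]^N"
  shows "\<exists>x y. f = [:-1,1:]^x * [:1,1,1:]^y"
proof -
  let ?L = "[:-1,1:] :: int poly" and ?P = "[:1,1,1:] :: int poly"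
  have f0: "f \<noteq> 0" using mon by auto
  have nu: "\<not> is_unit ?L" using Lin_prime by (simp add: prime_def prime_elem_def)
  define x where "x = multiplicity ?L f"
  obtain g where fg: "f = ?L ^ x * g" and ng: "\<not> ?L dvd g"
    using multiplicity_decompose'[OF f0 nu] unfolding x_def by blast
  have gd: "g dvd ?L^N * ?P^N" using dv fg by (metis dvd_mult_right)
  have "coprime ?L g" using Lin_prime ng by (simp add: prime_elem_imp_coprime prime_def)
  then have "coprime (?L^N) g" by simp
  then have "coprime g (?L^N)" by (simp add: coprime_commute)
  then have "g dvd ?P^N" using gd coprime_dvd_mult_right_iff by blast
  then obtain y where y: "normalize g = normalize (?P ^ y)"
    using divides_primepow_weak[OF Phi_prime] by metis
  have "lead_coeff f = lead_coeff (?L ^ x * g)" using fg by (rule arg_cong)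
  then have lg: "lead_coeff g = 1"
    using mon by (simp add: lead_coeff_mult lead_coeff_power)
  have "g = ?P ^ y"
    using y lg by (simp add: normalize_poly_def lead_coeff_power one_pCons[symmetric])
  then show ?thesis using fg by blast
qed

lemma prod_lin:
  fixes c :: "nat \<Rightarrow> int"
  shows "degree (\<Prod>i=0..<n. [:-c i, 1:]) = n \<and> coeff (\<Prod>i=0..<n. [:-c i, 1:]) n = 1 \<and>
    (n > 0 \<longrightarrow> coeff (\<Prod>i=0..<n. [:-c i, 1:]) (n-1) = - (\<Sum>i<n. c i))"
proof (induction n)
  case 0 then show ?case by simp
next
  case (Suc n)
  define P where "P = (\<Prod>i=0..<n. [:-c i, 1:])"
  have e: "(\<Prod>i=0..<Suc n. [:-c i, 1:]) = smult (- c n) P + pCons 0 P"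
    by (simp add: P_def mult_pCons_right)
  have dP: "degree P = n" and cP: "coeff P n = 1" using Suc by (auto simp: P_def)
  have P0: "P \<noteq> 0" using cP by auto
  have c1: "coeff (smult (- c n) P + pCons 0 P) (Suc n) = 1"
    using dP cP by (simp add: coeff_eq_0)
  have d1: "degree (smult (- c n) P + pCons 0 P) = Suc n"
  proof -
    have "degree (smult (- c n) P + pCons 0 P) \<le> Suc n"
      using dP by (intro degree_add_le) (auto simp: degree_pCons_eq_if)
    moreover have "coeff (smult (- c n) P + pCons 0 P) (Suc n) \<noteq> 0" using c1 by simp
    ultimately show ?thesis using le_degree by (metis le_antisym)
  qed
  have c2: "coeff (smult (- c n) P + pCons 0 P) n = - (\<Sum>i<Suc n. c i)"
  proof (cases n)
    case 0 then show ?thesis using cP by simp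
  next
    case (Suc m)
    have "coeff P m = - (\<Sum>i<n. c i)" using Suc.IH Suc by (simp add: P_def)
    then show ?thesis using Suc cP by simp
  qed
  show ?case using c1 d1 c2 unfolding e by simp
qed

lemma card_fixed_le:
  assumes p: "p permutes {0..<n}" and pid: "p \<noteq> id"
  shows "card {i\<in>{0..<n}. p i = i} \<le> n - 2"
proof -
  obtain i0 where i0: "p i0 \<noteq> i0" using pid by (auto simp: fun_eq_iff)
  have i0n: "i0 \<in> {0..<n}" using i0 p by (meson permutes_not_in)
  have i1n: "p i0 \<in> {0..<n}" using i0n p by (simp add: permutes_in_image)
  have i1: "p (p i0) \<noteq> p i0" using i0 permutes_inj[OF p] by (metis injD)
  have sub: "{i\<in>{0..<n}. p i = i} \<subseteq> {0..<n} - {i0, p i0}" using i0 i1 by auto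
  have "card {i\<in>{0..<n}. p i = i} \<le> card ({0..<n} - {i0, p i0})"
    by (rule card_mono[OF _ sub]) simp
  also have "\<dots> = n - 2" using i0n i1n i0 by (subst card_Diff_subset) auto
  finally show ?thesis .
qed

lemma trace_coeff:
  fixes A :: "int mat"
  assumes A: "A \<in> carrier_mat n n" and n: "0 < n"
  shows "coeff (det ([:0, 1:] \<cdot>\<^sub>m 1\<^sub>m n - map_mat (\<lambda>a. [:a:]) A)) (n-1) = - (\<Sum>i<n. A $$ (i,i))"
proof -
  define M where "M = [:0, 1:] \<cdot>\<^sub>m 1\<^sub>m n - map_mat (\<lambda>a. [:a:]) A"
  have Mc: "M \<in> carrier_mat n n" using A unfolding M_def by (intro minus_carrier_mat) simp
  have Mij: "M $$ (i,j) = (if i = j then [:- A $$ (i,i), 1:] else [:- A $$ (i,j):])" if "i < n" "j < n" for i j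
    using that A by (auto simp: M_def)
  define f where "f = (\<lambda>p. signof p * (\<Prod>i = 0..<n. M $$ (i, p i)) :: int poly)"
  define S where "S = {p. p permutes {0..<n}}"
  have fin: "finite S" unfolding S_def by (simp add: finite_permutations)
  have idS: "id \<in> S" unfolding S_def by (simp add: permutes_id)
  have "det M = sum f S" unfolding f_def S_def by (rule det_def'[OF Mc])
  then have "coeff (det M) (n-1) = (\<Sum>p\<in>S. coeff (f p) (n-1))" by (simp add: coeff_sum)
  also have "\<dots> = coeff (f id) (n-1) + (\<Sum>p\<in>S - {id}. coeff (f p) (n-1))"
    using fin idS by (simp add: sum.remove)
  also have "(\<Sum>p\<in>S - {id}. coeff (f p) (n-1)) = 0"
  proof (rule sum.neutral, rule ballI)
    fix p assume pS: "p \<in> S - {id}"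
    then have p: "p permutes {0..<n}" and pid: "p \<noteq> id" by (auto simp: S_def)
    have "degree (\<Prod>i = 0..<n. M $$ (i, p i)) \<le> sum (degree \<circ> (\<lambda>i. M $$ (i, p i))) {0..<n}"
      by (rule degree_prod_sum_le) simp
    also have "\<dots> \<le> (\<Sum>i\<in>{0..<n}. if p i = i then 1 else 0)"
    proof (rule sum_mono)
      fix i assume i: "i \<in> {0..<n}"
      then have "p i < n" using p by (simp add: permutes_in_image)
      then show "(degree \<circ> (\<lambda>i. M $$ (i, p i))) i \<le> (if p i = i then 1 else 0)"
        using i Mij[of i "p i"] by auto
    qed
    also have "\<dots> = card {i\<in>{0..<n}. p i = i}"
      by (simp add: sum.If_cases Int_def conj_commute)
    also have "\<dots> \<le> n - 2" by (rule card_fixed_le[OF p pid])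
    also have "\<dots> < n - 1"
    proof -
      have "n \<ge> 2" using card_fixed_le[OF p pid]
      proof -
        obtain i0 where i0: "p i0 \<noteq> i0" using pid by (auto simp: fun_eq_iff)
        have i0n: "i0 \<in> {0..<n}" using i0 p by (meson permutes_not_in)
        have i1n: "p i0 \<in> {0..<n}" using i0n p by (simp add: permutes_in_image)
        show ?thesis using i0 i0n i1n by auto
      qed
      then show ?thesis by simp
    qed
    finally have "degree (\<Prod>i = 0..<n. M $$ (i, p i)) < n - 1" .
    then show "coeff (f p) (n-1) = 0"
      unfolding f_def by (intro coeff_eq_0) simp
  qed
  also have "f id = (\<Prod>i=0..<n. [:- A $$ (i,i), 1:])"
    unfolding f_def by (simp add: Mij)
  also have "coeff (\<dots>) (n-1) = - (\<Sum>i<n. A $$ (i,i))"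
    using prod_lin[of "\<lambda>i. A $$ (i,i)" n] n by simp
  finally show ?thesis unfolding M_def by simp
qed

lemma charpoly_deg:
  fixes A :: "int mat"
  assumes A: "A \<in> carrier_mat n n"
  shows "degree (det ([:0, 1:] \<cdot>\<^sub>m 1\<^sub>m n - map_mat (\<lambda>a. [:a:]) A)) = n \<and>
         lead_coeff (det ([:0, 1:] \<cdot>\<^sub>m 1\<^sub>m n - map_mat (\<lambda>a. [:a:]) A)) = 1"
proof -
  have "[:0, 1:] \<cdot>\<^sub>m 1\<^sub>m n - map_mat (\<lambda>a. [:a:]) A = char_poly_matrix A"
    using A by (intro eq_matI) (auto simp: char_poly_matrix_def)
  then show ?thesis using degree_monic_char_poly[OF A] by (simp add: char_poly_def)
qed

lemma const_sum: "(\<Sum>l\<in>S. [:f l:]) = [:\<Sum>l\<in>S. f l:]"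
  by (induct S rule: infinite_finite_induct) auto

lemma smult_sum_left: "smult (\<Sum>l\<in>S. f l) p = (\<Sum>l\<in>S. smult (f l) p)"
  by (induct S rule: infinite_finite_induct) (auto simp: smult_add_left)

lemma BC_entry:
  fixes a b :: "int mat" and X :: "int poly"
  assumes a: "a \<in> carrier_mat n n" and b: "b \<in> carrier_mat n n"
    and ab: "a * a = b" and ab2: "a * b = 1\<^sub>m n"
  defines "B \<equiv> X \<cdot>\<^sub>m 1\<^sub>m n - map_mat (\<lambda>x. [:x:]) a"
    and "C \<equiv> (X*X) \<cdot>\<^sub>m 1\<^sub>m n + X \<cdot>\<^sub>m map_mat (\<lambda>x. [:x:]) a + map_mat (\<lambda>x. [:x:]) b"
  shows "B * C = (X*X*X - 1) \<cdot>\<^sub>m 1\<^sub>m n"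
proof (rule eq_matI)
  fix i j assume "i < dim_row ((X*X*X - 1) \<cdot>\<^sub>m 1\<^sub>m n)" "j < dim_col ((X*X*X - 1) \<cdot>\<^sub>m 1\<^sub>m n)"
  then have i: "i < n" and j: "j < n" by auto
  have Bil: "B $$ (i,l) = (if i = l then X else 0) - [:a $$ (i,l):]" if "l < n" for l
    using i that a by (simp add: B_def)
  have Clj: "C $$ (l,j) = (if l = j then X*X else 0) + X * [:a $$ (l,j):] + [:b $$ (l,j):]" if "l < n" for l
    using j that a b by (simp add: C_def)
  have sa: "(\<Sum>l\<in>{0..<n}. a $$ (i,l) * a $$ (l,j)) = b $$ (i,j)"
    using ab[symmetric] i j a by (simp add: scalar_prod_def)
  have sb: "(\<Sum>l\<in>{0..<n}. a $$ (i,l) * b $$ (l,j)) = (if i = j then 1 else 0)"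
    using arg_cong[OF ab2, of "\<lambda>M. M $$ (i,j)"] i j a b by (simp add: scalar_prod_def)
  have "(B * C) $$ (i,j) = (\<Sum>l\<in>{0..<n}. B $$ (i,l) * C $$ (l,j))"
    using i j a b by (simp add: B_def C_def scalar_prod_def)
  also have "\<dots> = (\<Sum>l\<in>{0..<n}. (if i = l then X * C $$ (l,j) else 0)
        - ((if l = j then X*X*[:a $$ (i,l):] else 0) + X * [:a $$ (i,l) * a $$ (l,j):] + [:a $$ (i,l) * b $$ (l,j):]))"
    by (intro sum.cong refl) (auto simp: Bil Clj algebra_simps)
  also have "\<dots> = X * C $$ (i,j) - (X*X*[:a $$ (i,j):] + X * [:\<Sum>l\<in>{0..<n}. a $$ (i,l) * a $$ (l,j):]
        + [:\<Sum>l\<in>{0..<n}. a $$ (i,l) * b $$ (l,j):])"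
    using i j by (simp add: sum_subtractf sum.distrib sum_distrib_left[symmetric] const_sum smult_sum_left)
  also have "\<dots> = (X*X*X - 1) * (if i = j then 1 else 0)"
    unfolding sa sb using Clj[OF i] i j by (auto simp: algebra_simps one_pCons)
  also have "\<dots> = ((X*X*X - 1) \<cdot>\<^sub>m 1\<^sub>m n) $$ (i,j)" using i j by simp
  finally show "(B * C) $$ (i,j) = ((X*X*X - 1) \<cdot>\<^sub>m 1\<^sub>m n) $$ (i,j)" .
qed (use a b in \<open>auto simp: B_def C_def\<close>)

lemma coeff1_mult: "coeff (f * g) 1 = coeff f 0 * coeff g 1 + coeff f 1 * coeff (g::int poly) 0"
  by (simp add: coeff_mult)

lemma coeff_lin_pow: "coeff ([:1,c:]^x :: int poly) 1 = c * int x"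
  by (induction x) (auto simp: coeff1_mult coeff_0_power algebra_simps)

lemma coeff_Phi_pow: "coeff ([:1,1,1:]^y :: int poly) 1 = int y"
  by (induction y) (auto simp: coeff1_mult coeff_0_power algebra_simps)

lemma reflect_LP: "reflect_poly ([:-1,1:]^x * [:1,1,1:]^y :: int poly) = [:1,-1:]^x * [:1,1,1:]^y"
proof -
  have "reflect_poly ([:-1,1:] :: int poly) = [:1,-1:]" by (simp add: reflect_poly_def)
  moreover have "reflect_poly ([:1,1,1:] :: int poly) = [:1,1,1:]" by (simp add: reflect_poly_def)
  ultimately show ?thesis by (simp add: reflect_poly_mult reflect_poly_power)
qed

lemma degree_LP: "degree ([:-1,1:]^x * [:1,1,1:]^y :: int poly) = x + 2*y"
  by (simp add: degree_mult_eq degree_power_eq)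

lemma top_coeff_LP:
  assumes "0 < x + 2*y"
  shows "coeff ([:-1,1:]^x * [:1,1,1:]^y :: int poly) (x+2*y-1) = int y - int x"
proof -
  let ?F = "[:-1,1:]^x * [:1,1,1:]^y :: int poly"
  have "coeff (reflect_poly ?F) 1 = coeff ?F (degree ?F - 1)"
    using assms by (simp add: coeff_reflect_poly degree_LP)
  moreover have "coeff (reflect_poly ?F) 1 = int y - int x"
    unfolding reflect_LP coeff1_mult coeff_lin_pow coeff_Phi_pow by (simp add: coeff_0_power)
  ultimately show ?thesis by (simp add: degree_LP)
qed

lemma X3: "[:0,1:] * [:0,1:] * [:0,1:] - 1 = ([:-1,1:] * [:1,1,1:] :: int poly)"
  by (simp add: one_pCons)

lemma charA:
  assumes n: "0 < n"
  shows "\<exists>x y. det ([:0, 1:] \<cdot>\<^sub>m 1\<^sub>m n - map_mat (\<lambda>a. [:a:]) (Amat n)) = [:-1,1:]^x * [:1,1,1:]^y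
     \<and> 3 * int y = int n - eps n \<and> int x = int y + eps n"
proof -
  let ?X = "[:0,1:] :: int poly"
  define B where "B = ?X \<cdot>\<^sub>m 1\<^sub>m n - map_mat (\<lambda>a. [:a:]) (Amat n)"
  define C where "C = (?X*?X) \<cdot>\<^sub>m 1\<^sub>m n + ?X \<cdot>\<^sub>m map_mat (\<lambda>x. [:x:]) (Amat n) + map_mat (\<lambda>x. [:x:]) (A2mat n)"
  have BC: "B * C = (?X*?X*?X - 1) \<cdot>\<^sub>m 1\<^sub>m n"
    unfolding B_def C_def by (rule BC_entry) (auto simp: AA AA2)
  have Bc: "B \<in> carrier_mat n n" unfolding B_def by (intro minus_carrier_mat) simp
  have Cc: "C \<in> carrier_mat n n" unfolding C_def by simp
  have "det B * det C = (?X*?X*?X - 1)^n"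
    using det_mult[OF Bc Cc] BC by simp
  then have "det B dvd ([:-1,1:] * [:1,1,1:])^n" unfolding X3 by (metis dvd_triv_left)
  then have dv: "det B dvd [:-1,1:]^n * [:1,1,1:]^n" by (simp only: power_mult_distrib)
  have dl: "degree (det B) = n \<and> lead_coeff (det B) = 1"
    unfolding B_def by (rule charpoly_deg) simp
  obtain x y where xy: "det B = [:-1,1:]^x * [:1,1,1:]^y"
    using factor_Lin_Phi[OF _ dv] dl by blast
  have deg: "x + 2*y = n" using dl xy degree_LP by metis
  have "coeff (det B) (n-1) = - (\<Sum>i<n. Amat n $$ (i,i))"
    unfolding B_def by (rule trace_coeff[OF _ n]) simp
  also have "\<dots> = - eps n" using Amat_trace[OF n] by simp
  finally have "int y - int x = - eps n"
    using top_coeff_LP[of x y] deg n xy by simp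
  then have "3 * int y = int n - eps n \<and> int x = int y + eps n" using deg by linarith
  then show ?thesis using xy B_def by blast
qed

lemma prod_diff_dvd:
  fixes f g :: "'b \<Rightarrow> 'a::comm_ring_1"
  assumes "finite S" "\<And>i. i \<in> S \<Longrightarrow> d dvd (f i - g i)"
  shows "d dvd (prod f S - prod g S)"
  using assms
proof (induction S rule: finite_induct)
  case empty then show ?case by simp
next
  case (insert a S)
  have "prod f (insert a S) - prod g (insert a S) = (f a - g a) * prod f S + g a * (prod f S - prod g S)"
    using insert by (simp add: algebra_simps)
  moreover have "d dvd (f a - g a)" using insert by simp
  moreover have "d dvd (prod f S - prod g S)" using insert by simp
  ultimately show ?case by (metis dvd_add dvd_mult dvd_mult2)
qed

lemma det_dvd_cong:
  fixes M N :: "'a::comm_ring_1 mat"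
  assumes M: "M \<in> carrier_mat n n" and N: "N \<in> carrier_mat n n"
    and c: "\<And>i j. i < n \<Longrightarrow> j < n \<Longrightarrow> d dvd (M $$ (i,j) - N $$ (i,j))"
  shows "d dvd (det M - det N)"
proof -
  have "det M - det N = (\<Sum>p\<in>{p. p permutes {0..<n}}. signof p * ((\<Prod>i = 0..<n. M $$ (i, p i)) - (\<Prod>i = 0..<n. N $$ (i, p i))))"
    unfolding det_def'[OF M] det_def'[OF N] by (simp add: sum_subtractf algebra_simps)
  also have "d dvd \<dots>"
  proof (rule dvd_sum, rule dvd_mult)
    fix p assume "p \<in> {p. p permutes {0..<n}}"
    then have p: "p permutes {0..<n}" by simp
    show "d dvd ((\<Prod>i = 0..<n. M $$ (i, p i)) - (\<Prod>i = 0..<n. N $$ (i, p i)))"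
      by (rule prod_diff_dvd) (use p c permutes_in_image in auto)
  qed
  finally show ?thesis .
qed

lemma sum_rev_delta:
  fixes f :: "nat \<Rightarrow> 'a::comm_ring_1"
  assumes "r < k"
  shows "(\<Sum>l\<in>{0..<k}. (if r + l = k - 1 then 1 else 0) * f l) = f (k-1-r)"
proof -
  have "(\<Sum>l\<in>{0..<k}. (if r + l = k - 1 then 1 else 0) * f l) = (\<Sum>l\<in>{0..<k}. if l = k-1-r then f l else 0)"
    using assms by (intro sum.cong refl) auto
  also have "\<dots> = f (k-1-r)" using assms by simp
  finally show ?thesis .
qed

lemma sum_rev_delta':
  fixes f :: "nat \<Rightarrow> 'a::comm_ring_1"
  assumes "s < k"
  shows "(\<Sum>l\<in>{0..<k}. f l * (if l + s = k - 1 then 1 else 0)) = f (k-1-s)"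
proof -
  have "(\<Sum>l\<in>{0..<k}. f l * (if l + s = k - 1 then 1 else 0)) = (\<Sum>l\<in>{0..<k}. if l = k-1-s then f l else 0)"
    using assms by (intro sum.cong refl) auto
  also have "\<dots> = f (k-1-s)" using assms by simp
  finally show ?thesis .
qed

lemma det_rev:
  fixes M :: "'a::comm_ring_1 mat"
  assumes M: "M \<in> carrier_mat k k"
  shows "det (mat k k (\<lambda>(r,s). M $$ (k-1-r, k-1-s))) = det M"
proof -
  define J where "J = (mat k k (\<lambda>(i,j). if i + j = k - 1 then 1 else 0) :: 'a mat)"
  have Jc: "J \<in> carrier_mat k k" by (simp add: J_def)
  have JJ: "J * J = 1\<^sub>m k"
  proof (rule eq_matI)
    fix i j assume "i < dim_row (1\<^sub>m k :: 'a mat)" "j < dim_col (1\<^sub>m k :: 'a mat)"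
    then have i: "i < k" and j: "j < k" by auto
    have "(J * J) $$ (i,j) = (\<Sum>l\<in>{0..<k}. (if i + l = k - 1 then 1 else 0) * (if l + j = k - 1 then 1 else 0))"
      using i j by (simp add: J_def scalar_prod_def)
    also have "\<dots> = (if (k-1-i) + j = k - 1 then 1 else 0)"
      using sum_rev_delta[OF i, of "\<lambda>l. (if l + j = k - 1 then 1 else 0)"] by simp
    also have "\<dots> = 1\<^sub>m k $$ (i,j)" using i j by auto
    finally show "(J * J) $$ (i,j) = 1\<^sub>m k $$ (i,j)" .
  qed (auto simp: J_def)
  have JMJ: "J * M * J = mat k k (\<lambda>(r,s). M $$ (k-1-r, k-1-s))"
  proof (rule eq_matI)
    fix r s assume "r < dim_row (mat k k (\<lambda>(r,s). M $$ (k-1-r, k-1-s)))" "s < dim_col (mat k k (\<lambda>(r,s). M $$ (k-1-r, k-1-s)))"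
    then have r: "r < k" and s: "s < k" by auto
    have JM: "(J * M) $$ (r,t) = M $$ (k-1-r, t)" if t: "t < k" for t
    proof -
      have "(J * M) $$ (r,t) = (\<Sum>l\<in>{0..<k}. (if r + l = k - 1 then 1 else 0) * M $$ (l,t))"
        using r t M by (simp add: J_def scalar_prod_def)
      also have "\<dots> = M $$ (k-1-r, t)" by (rule sum_rev_delta[OF r])
      finally show ?thesis .
    qed
    have "(J * M * J) $$ (r,s) = (\<Sum>l\<in>{0..<k}. (J * M) $$ (r,l) * (if l + s = k - 1 then 1 else 0))"
      using r s M by (simp add: J_def scalar_prod_def)
    also have "\<dots> = (J * M) $$ (r, k-1-s)" by (rule sum_rev_delta'[OF s])
    also have "\<dots> = M $$ (k-1-r, k-1-s)" using s by (simp add: JM)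
    finally show "(J * M * J) $$ (r,s) = mat k k (\<lambda>(r,s). M $$ (k-1-r, k-1-s)) $$ (r,s)"
      using r s by simp
  qed (use M in \<open>auto simp: J_def\<close>)
  have "det (J * M * J) = det J * det M * det J"
    using Jc M by (simp add: det_mult[of _ k])
  also have "\<dots> = det M * det (J * J)" using Jc by (simp add: det_mult[of _ k] algebra_simps)
  also have "\<dots> = det M" by (simp add: JJ)
  finally show ?thesis using JMJ by simp
qed

lemma exp_aux1: "nat (- (int y - int k)) + min y k = k" by (cases "y \<le> k") auto
lemma exp_aux2: "nat (int y - int k) + min y k = y" by (cases "y \<le> k") auto

lemma ring_aux:
  assumes "(u::'a::comm_ring_1) * w = z * c"
  shows "u * d - h * c = u * (d - w) + (z - h) * c"
proof -
  have "u * (d - w) + (z - h) * c = u * d - u * w + z * c - h * c" by (simp add: algebra_simps)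
  then show ?thesis using assms by simp
qed

lemma cancel_mod:
  fixes F G H :: "int poly"
  assumes p: "prime p" and d: "[:int p:] dvd (F * H - G * H)" and H: "lead_coeff H = 1"
  shows "[:int p:] dvd (F - G)"
proof -
  have "prime (int p)" using p by simp
  then have "prime_elem (int p)" by (rule prime_imp_prime_elem)
  then have pe: "prime_elem [:int p:]" by (rule lift_prime_elem_poly)
  have "(F - G) * H = F * H - G * H" by (rule left_diff_distrib)
  then have "[:int p:] dvd ((F - G) * H)" using d by simp
  then have "[:int p:] dvd (F - G) \<or> [:int p:] dvd H" using pe prime_elem_dvd_mult_iff by blast
  moreover have "\<not> [:int p:] dvd H"
  proof
    assume "[:int p:] dvd H"
    then have "int p dvd coeff H (degree H)" by (simp add: const_poly_dvd_iff)
    then have "int p dvd 1" using H by simp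
    then show False using p by (simp add: prime_gt_1_nat)
  qed
  ultimately show ?thesis by blast
qed

theorem theorem1p3:
  fixes p l q k :: nat
  assumes "prime p" and "q = p ^ l" and "2 * k \<le> q"
  defines "a \<equiv> (int q - eps q) div 3 - int k"
      and "b \<equiv> (int q + 2 * eps q) div 3 - int k"
  shows "\<forall>i. [coeff (chi (q - k) * [:1, 1, 1:] ^ nat (- a) * [:-1, 1:] ^ nat (- b)) i
              = coeff ([:1, 1, 1:] ^ nat a * [:-1, 1:] ^ nat b * Dpoly k) i] (mod int p)"
proof -
  note p = assms(1) and qd = assms(2) and kq = assms(3)
  let ?X = "[:0,1:] :: int poly"
  let ?L = "[:-1,1:] :: int poly" and ?P = "[:1,1,1:] :: int poly"
  let ?Pp = "[:int p:] :: int poly"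
  have q0: "0 < q" using qd p by (simp add: prime_gt_0_nat)
  define m where "m = q - k"
  have qmk: "q = m + k" and km: "k \<le> m" using kq by (auto simp: m_def)
  obtain x y where xy: "det (?X \<cdot>\<^sub>m 1\<^sub>m q - map_mat (\<lambda>a. [:a:]) (Amat q)) = ?L^x * ?P^y"
    and y3: "3 * int y = int q - eps q" and xy': "int x = int y + eps q"
    using charA[OF q0] by blast
  have a_eq: "a = int y - int k" unfolding a_def using y3 by simp
  have b_eq: "b = int x - int k" unfolding b_def
  proof -
    have "int q + 2 * eps q = 3 * int x" using y3 xy' by simp
    then show "(int q + 2 * eps q) div 3 - int k = int x - int k" by simp
  qed
  define B where "B = ?X \<cdot>\<^sub>m 1\<^sub>m q - map_mat (\<lambda>a. [:a:]) (Amat q)"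
  define C where "C = (?X*?X) \<cdot>\<^sub>m 1\<^sub>m q + ?X \<cdot>\<^sub>m map_mat (\<lambda>x. [:x:]) (Amat q) + map_mat (\<lambda>x. [:x:]) (A2mat q)"
  have BC: "B * C = (?X*?X*?X - 1) \<cdot>\<^sub>m 1\<^sub>m (m+k)"
    unfolding B_def C_def qmk[symmetric] by (rule BC_entry) (auto simp: AA AA2)
  have Bc: "B \<in> carrier_mat (m+k) (m+k)" unfolding B_def qmk[symmetric] by (intro minus_carrier_mat) simp
  have Cc: "C \<in> carrier_mat (m+k) (m+k)" unfolding C_def qmk[symmetric] by simp
  define B11 where "B11 = mat m m (\<lambda>(i,j). B $$ (i,j))"
  define C22 where "C22 = mat k k (\<lambda>(i,j). C $$ (m+i, m+j))"
  have jac: "det B * det C22 = det B11 * (?X*?X*?X - 1)^k"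
    unfolding B11_def C22_def by (rule jacobi_block[OF Bc Cc BC])
  have dB: "det B = ?L^x * ?P^y" using xy B_def by simp
  have sig: "[(-1::int)^(q-1) = 1] (mod int p)" by (rule sigma_cong[OF p qd])
  have cB: "?Pp dvd (det B11 - chi m)"
    unfolding chi_def
  proof (rule det_dvd_cong[of _ m])
    show "B11 \<in> carrier_mat m m" by (simp add: B11_def)
    show "[:0, 1:] \<cdot>\<^sub>m 1\<^sub>m m - map_mat (\<lambda>a. [:a:]) (Pmat m) \<in> carrier_mat m m"
      by (intro minus_carrier_mat) (simp add: Pmat_def)
    fix i j assume i: "i < m" and j: "j < m"
    have iq: "i < q" and jq: "j < q" using i j qmk by auto
    have e1: "B11 $$ (i,j) = (if i = j then ?X else 0) - [:Amat q $$ (i,j):]"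
      using i j iq jq by (simp add: B11_def B_def)
    have e2: "([:0, 1:] \<cdot>\<^sub>m 1\<^sub>m m - map_mat (\<lambda>a. [:a:]) (Pmat m)) $$ (i,j)
        = (if i = j then ?X else 0) - [:int ((i+j) choose i):]"
      using i j by (simp add: Pmat_def)
    have c1: "[(-1)^j * int ((q-1-i) choose j) = int ((i+j) choose j)] (mod int p)"
      by (rule C1[OF p qd iq jq])
    have "[Amat q $$ (i,j) = 1 * int ((i+j) choose j)] (mod int p)"
      using iq jq cong_mult[OF sig c1] by (simp add: Amat_def mult.assoc)
    moreover have "(i+j) choose j = (i+j) choose i" by (simp add: binomial_symmetric[of j "i+j"])
    ultimately have "int p dvd (Amat q $$ (i,j) - int ((i+j) choose i))"
      by (simp add: cong_iff_dvd_diff)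
    then have "int p dvd (int ((i+j) choose i) - Amat q $$ (i,j))"
      by (metis dvd_minus_iff minus_diff_eq)
    then have "?Pp dvd [:int ((i+j) choose i) - Amat q $$ (i,j):]"
      by (simp add: const_poly_dvd_const_poly_iff)
    then show "?Pp dvd (B11 $$ (i,j) - ([:0, 1:] \<cdot>\<^sub>m 1\<^sub>m m - map_mat (\<lambda>a. [:a:]) (Pmat m)) $$ (i,j))"
      unfolding e1 e2 by (simp add: diff_pCons)
  qed
  define M where "M = [:0, 0, 1:] \<cdot>\<^sub>m 1\<^sub>m k + map_mat (\<lambda>a. [:a:]) (Pmat k)"
  have Mc: "M \<in> carrier_mat k k" by (simp add: M_def Pmat_def)
  have dQ: "det (mat k k (\<lambda>(r,s). M $$ (k-1-r, k-1-s))) = Dpoly k"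
    unfolding Dpoly_def M_def[symmetric] by (rule det_rev[OF Mc])
  have cC: "?Pp dvd (det C22 - det (mat k k (\<lambda>(r,s). M $$ (k-1-r, k-1-s))))"
  proof (rule det_dvd_cong[of _ k])
    show "C22 \<in> carrier_mat k k" by (simp add: C22_def)
    show "mat k k (\<lambda>(r,s). M $$ (k-1-r, k-1-s)) \<in> carrier_mat k k" by simp
    fix r s assume r: "r < k" and s: "s < k"
    have rq: "m + r < q" and sq: "m + s < q" using r s qmk by auto
    define i' where "i' = k - 1 - r"
    define j' where "j' = k - 1 - s"
    have i'q: "i' < q" and j'q: "j' < q" using r s qmk by (auto simp: i'_def j'_def)
    have A0: "Amat q $$ (m+r, m+s) = 0"
    proof -
      have "q - 1 - (m + r) < m + s" using r s qmk km by auto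
      then show ?thesis using rq sq by (simp add: Amat_def binomial_eq_0)
    qed
    have A2e: "A2mat q $$ (m+r, m+s) = (-1)^(m+s) * int ((q-1-i') choose j')"
    proof -
      have "q - 1 - i' = m + r" "q - 1 - (m+s) = j'" using r s qmk by (auto simp: i'_def j'_def)
      then show ?thesis using rq sq by (simp add: A2mat_def)
    qed
    have sgn: "(-1::int)^(m+s) = (-1)^(q-1) * (-1)^j'"
    proof -
      have "m + s + j' = q - 1" using s qmk by (auto simp: j'_def)
      then have "(-1::int)^(q-1) = (-1)^(m+s) * (-1)^j'" by (metis power_add)
      then have "(-1::int)^(q-1) * (-1)^j' = (-1)^(m+s) * ((-1)^j' * (-1)^j')" by (simp add: mult.assoc)
      then show ?thesis by (simp add: neg1_sq)
    qed
    have c1: "[(-1)^j' * int ((q-1-i') choose j') = int ((i'+j') choose j')] (mod int p)"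
      by (rule C1[OF p qd i'q j'q])
    have "[A2mat q $$ (m+r, m+s) = 1 * int ((i'+j') choose j')] (mod int p)"
      unfolding A2e sgn using cong_mult[OF sig c1] by (simp add: mult.assoc)
    moreover have "(i'+j') choose j' = (i'+j') choose i'" by (simp add: binomial_symmetric[of j' "i'+j'"])
    ultimately have dv: "int p dvd (A2mat q $$ (m+r, m+s) - int ((i'+j') choose i'))"
      by (simp add: cong_iff_dvd_diff)
    have e1: "C22 $$ (r,s) = (if r = s then ?X * ?X else 0) + [:A2mat q $$ (m+r, m+s):]"
      using r s rq sq A0 by (simp add: C22_def C_def)
    have e2: "mat k k (\<lambda>(r,s). M $$ (k-1-r, k-1-s)) $$ (r,s) = (if r = s then [:0,0,1:] else 0) + [:int ((i'+j') choose i'):]"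
    proof -
      have "(k-1-r = k-1-s) = (r = s)" using r s by auto
      then show ?thesis using r s by (simp add: M_def Pmat_def i'_def j'_def add.commute)
    qed
    have XX: "?X * ?X = [:0,0,1:]" by simp
    show "?Pp dvd (C22 $$ (r,s) - mat k k (\<lambda>(r,s). M $$ (k-1-r, k-1-s)) $$ (r,s))"
      unfolding e1 e2 XX using dv by (simp add: const_poly_dvd_const_poly_iff diff_pCons)
  qed
  have cC': "?Pp dvd (det C22 - Dpoly k)" using cC dQ by simp
  have X3': "?X*?X*?X - 1 = ?L * ?P" by (simp add: one_pCons)
  have jac': "(?L^x * ?P^y) * det C22 = det B11 * (?L * ?P)^k"
    using jac unfolding dB X3' .
  have main0: "?Pp dvd ((?L^x * ?P^y) * Dpoly k - chi m * (?L * ?P)^k)"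
  proof -
    have "(?L^x * ?P^y) * Dpoly k - chi m * (?L * ?P)^k
        = (?L^x * ?P^y) * (Dpoly k - det C22) + (det B11 - chi m) * (?L * ?P)^k"
      using ring_aux[OF jac'] .
    moreover have "?Pp dvd (?L^x * ?P^y) * (Dpoly k - det C22)"
      using cC' by (metis dvd_mult minus_diff_eq dvd_minus_iff)
    moreover have "?Pp dvd (det B11 - chi m) * (?L * ?P)^k" using cB by (rule dvd_mult2)
    ultimately show ?thesis by (metis dvd_add)
  qed
  have main: "?Pp dvd (?L^x * ?P^y * Dpoly k - chi m * (?L^k * ?P^k))"
    using main0 by (simp only: power_mult_distrib)
  define H where "H = ?P ^ min y k * ?L ^ min x k"
  have H1: "lead_coeff H = 1" by (simp add: H_def lead_coeff_mult lead_coeff_power)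
  define F where "F = chi (q - k) * ?P ^ nat (- a) * ?L ^ nat (- b)"
  define G where "G = ?P ^ nat a * ?L ^ nat b * Dpoly k"
  have pa1: "?P ^ nat (- a) * ?P ^ min y k = ?P ^ k"
    unfolding power_add[symmetric] a_eq exp_aux1 ..
  have pb1: "?L ^ nat (- b) * ?L ^ min x k = ?L ^ k"
    unfolding power_add[symmetric] b_eq exp_aux1 ..
  have pa2: "?P ^ nat a * ?P ^ min y k = ?P ^ y"
    unfolding power_add[symmetric] a_eq exp_aux2 ..
  have pb2: "?L ^ nat b * ?L ^ min x k = ?L ^ x"
    unfolding power_add[symmetric] b_eq exp_aux2 ..
  have FH: "F * H = chi m * (?L^k * ?P^k)"
  proof -
    have "F * H = chi m * ((?L ^ nat (- b) * ?L ^ min x k) * (?P ^ nat (- a) * ?P ^ min y k))"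
      unfolding F_def H_def m_def by (simp only: mult_ac)
    then show ?thesis unfolding pa1 pb1 .
  qed
  have GH: "G * H = ?L^x * ?P^y * Dpoly k"
  proof -
    have "G * H = (?L ^ nat b * ?L ^ min x k) * (?P ^ nat a * ?P ^ min y k) * Dpoly k"
      unfolding G_def H_def by (simp only: mult_ac)
    then show ?thesis unfolding pa2 pb2 .
  qed
  have "?Pp dvd (F * H - G * H)"
    unfolding FH GH using main by (metis dvd_minus_iff minus_diff_eq)
  then have "?Pp dvd (F - G)" by (rule cancel_mod[OF p _ H1])
  then have "\<forall>i. int p dvd coeff (F - G) i" by (simp add: const_poly_dvd_iff)
  then show ?thesis unfolding F_def G_def by (simp add: cong_iff_dvd_diff)
qed

end
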